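(* Let $\mathbb{A}=\{a_n\}_{n\in\mathbb{N}^+}$ be a set of integers $\ge2$, listed in increasing order, and let $\mathbb{A}'=\{a'_n\}_{n\in\mathbb{N}^+}\subset\mathbb{A}$ be a subset such that $\sum_{n=1}^{\infty}e^{-a'_n t}$ is majorized by $t^{-1/2}$ as $t\to0^+$. Let $\tilde{\mathbb{A}}=\mathbb{A}\setminus\mathbb{A}'=\{\tilde a_n\}_{n\in\mathbb{N}^+}$, listed in increasing order. If for some $i,j\in\mathbb{N}$ the Dirichlet series $$\mathcal{D}_{\{\tilde a_{2^i n+j}\}_{n\in\mathbb{N}^+}}(s)=\sum_{n=1}^{\infty}\tilde a_{2^in+j}^{-s}$$ admits a non-singular analytic continuation to some domain $\mathcal{U}\subset\mathbb{C}$, then (the continuation of) $\zeta_{\mathbb{A}}$ satisfies $\zeta_{\mathbb{A}}(s)\neq0$ for all $s\in\mathcal{U}\cap\{s:\Re(s)>1/2\}$.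
   Context: For a strictly increasing sequence $\mathbb{B}=\{b_n\}$ of positive integers, $\mathcal{D}_{\mathbb{B}}(s)=\sum_n b_n^{-s}$, and if $1\notin\mathbb{B}$, $\zeta_{\mathbb{B}}(s)=\prod_n \frac{1}{1-b_n^{-s}}$ (defined for $\Re(s)>1$ and by analytic continuation elsewhere). "$\sum e^{-a'_nt}$ is majorized by $t^{-1/2}$ as $t\to0^+$" means there is $C>0$ with $\sum_n e^{-a'_nt}\le Ct^{-1/2}$ for all sufficiently small $t>0$. *)

theory Defs
  imports "HOL-Analysis.Analysis"
begin

text \<open>The increasing enumeration of an infinite set of naturals, 0-indexed:
  nth_elem B 0 is the least element (b_1 in the paper), nth_elem B n = b_(n+1).\<close>
definition nth_elem :: "nat set \<Rightarrow> nat \<Rightarrow> nat" where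
  "nth_elem B n = Infinite_Set.enumerate B n"

definition dirichlet_D :: "nat set \<Rightarrow> complex \<Rightarrow> complex" where
  "dirichlet_D B s = (\<Sum>n. (of_nat (nth_elem B n) :: complex) powr (- s))"

definition zeta_B :: "nat set \<Rightarrow> complex \<Rightarrow> complex" where
  "zeta_B B s = (\<Prod>n. inverse (1 - (of_nat (nth_elem B n) :: complex) powr (- s)))"

end

theory Submission imports Defs "HOL-Complex_Analysis.Cauchy_Integral_Formula" "HOL-Real_Asymp.Real_Asymp" begin

lemma A1:
  fixes g :: "nat \<Rightarrow> complex \<Rightarrow> complex"
  assumes hol: "\<And>n. g n holomorphic_on S"
  shows "(\<lambda>s. \<Sum>i<n. g i s) holomorphic_on S"
    by (rule holomorphic_on_sum) (rule hol)

lemma A2:  fixes g :: "nat \<Rightarrow> complex \<Rightarrow> complex"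
  assumes "summable M" "\<forall>n. \<forall>w\<in>K. norm (g n w) \<le> M n"
  shows "uniform_limit K (\<lambda>n s. \<Sum>i<n. g i s) (\<lambda>s. \<Sum>n. g n s) sequentially"
      by (rule Weierstrass_m_test) (use assms in auto)

lemma holo_series:
  fixes g :: "nat \<Rightarrow> complex \<Rightarrow> complex"
  assumes S: "open S" and hol: "\<And>n. g n holomorphic_on S"
    and bnd: "\<And>z. z \<in> S \<Longrightarrow> \<exists>d>0. cball z d \<subseteq> S \<and> (\<exists>M. summable M \<and> (\<forall>n. \<forall>w\<in>cball z d. norm (g n w) \<le> M n))"
  shows "(\<lambda>s. \<Sum>n. g n s) holomorphic_on S"
proof -
  have U: "\<exists>d. 0 < d \<and> cball x d \<subseteq> S \<and> uniform_limit (cball x d) (\<lambda>n s. \<Sum>i<n. g i s) (\<lambda>s. \<Sum>n. g n s) sequentially"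
    if "x \<in> S" for x
  proof -
    from bnd[OF that] obtain d M where d: "d > 0" "cball x d \<subseteq> S" "summable M" "\<forall>n. \<forall>w\<in>cball x d. norm (g n w) \<le> M n"
      by blast
    show ?thesis using d A2[OF d(3,4)] by blast
  qed
  show ?thesis
    using holomorphic_uniform_sequence[OF S A1[OF hol] U] .
qed

lemma holo_series_half:
  fixes g :: "nat \<Rightarrow> complex \<Rightarrow> complex"
  assumes hol: "\<And>n. g n holomorphic_on {s. \<sigma>1 < Re s}"
    and bnd: "\<And>\<sigma>0. \<sigma>0 > \<sigma>1 \<Longrightarrow> \<exists>M. summable M \<and> (\<forall>n s. \<sigma>0 \<le> Re s \<longrightarrow> norm (g n s) \<le> M n)"
  shows "(\<lambda>s. \<Sum>n. g n s) holomorphic_on {s. \<sigma>1 < Re s}"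
proof (rule holo_series[OF _ hol])
  show "open {s. \<sigma>1 < Re s}" by (simp add: open_halfspace_Re_gt)
  fix z assume z: "z \<in> {s. \<sigma>1 < Re s}"
  define d where "d = (Re z - \<sigma>1) / 2"
  have d: "d > 0" using z by (simp add: d_def)
  have sub: "\<sigma>1 + d \<le> Re w" if "w \<in> cball z d" for w
  proof -
    have "\<bar>Re z - Re w\<bar> \<le> d" using that abs_Re_le_cmod[of "z - w"] by (simp add: dist_norm)
    then have "Re z - Re w \<le> d" by simp
    thus ?thesis unfolding d_def by (simp add: field_simps)
  qed
  have "\<sigma>1 + d > \<sigma>1" using d by simp
  from bnd[OF this] obtain M where M: "summable M" "\<forall>n s. \<sigma>1 + d \<le> Re s \<longrightarrow> norm (g n s) \<le> M n"
    by blast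
  have c1: "cball z d \<subseteq> {s. \<sigma>1 < Re s}" using sub d by fastforce
  have c2: "\<forall>n. \<forall>w\<in>cball z d. norm (g n w) \<le> M n" using sub M(2) by blast
  show "\<exists>d>0. cball z d \<subseteq> {s. \<sigma>1 < Re s} \<and> (\<exists>M. summable M \<and> (\<forall>n. \<forall>w\<in>cball z d. norm (g n w) \<le> M n))"
    using d c1 c2 M(1) by blast
qed

lemma norm_nat_powr: "norm ((of_nat x :: complex) powr s) = real x powr (Re s)"
  by (subst norm_powr_real_powr) auto

lemma enum_ge:
  assumes "infinite B" "\<forall>b\<in>B. 2 \<le> b"
  shows "n + 2 \<le> enumerate B n"
proof (induction n)
  case 0
  then show ?case using enumerate_in_set[OF assms(1), of 0] assms(2) by auto
next
  case (Suc n)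
  then show ?case using enumerate_step[OF assms(1), of n] by linarith
qed

lemma enum_range:
  fixes g :: "nat \<Rightarrow> nat"
  assumes "strict_mono g"
  shows "enumerate (range g) n = g n"
proof (induction n)
  case 0
  have "(LEAST x. x \<in> range g) = g 0"
    by (rule Least_equality) (auto simp: strict_mono_less_eq[OF assms])
  then show ?case by (simp add: enumerate_0)
next
  case (Suc n)
  have inf: "infinite (range g)"
    using assms strict_mono_imp_inj_on finite_imageD by (metis infinite_UNIV_nat)
  have "(LEAST s. s \<in> range g \<and> g n < s) = g (Suc n)"
  proof (rule Least_equality)
    show "g (Suc n) \<in> range g \<and> g n < g (Suc n)" using assms by (auto simp: strict_mono_def)
    fix y assume "y \<in> range g \<and> g n < y"
    then obtain k where "y = g k" "g n < g k" by auto
    then have "n < k" using assms strict_mono_less by blast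
    then show "g (Suc n) \<le> y" using \<open>y = g k\<close> assms by (simp add: strict_mono_less_eq)
  qed
  then show ?case using enumerate_Suc''[OF inf, of n] Suc by simp
qed

lemma summable_shift_powr:
  assumes "\<sigma> > 1"
  shows "summable (\<lambda>n. real (n + 2) powr (-\<sigma>))"
proof -
  have "summable (\<lambda>n. real n powr (-\<sigma>))" using assms by (simp add: summable_real_powr_iff)
  then have "summable (\<lambda>n. real (n + 2) powr (-\<sigma>))"
    using summable_iff_shift[where f = "\<lambda>n. real n powr (-\<sigma>)" and k = 2] by simp
  then show ?thesis .
qed

lemma seq_powr_bound:
  assumes "\<And>n. n + 2 \<le> e n" "\<sigma> \<le> Re s" "0 \<le> \<sigma>"
  shows "norm ((of_nat (e n) :: complex) powr (-s)) \<le> real (n + 2) powr (-\<sigma>)"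
proof -
  have "norm ((of_nat (e n) :: complex) powr (-s)) = real (e n) powr (- Re s)"
    by (simp add: norm_nat_powr)
  also have "\<dots> \<le> real (e n) powr (-\<sigma>)"
    using assms(1)[of n] assms(2) by (intro powr_mono) auto
  also have "\<dots> \<le> real (n + 2) powr (-\<sigma>)"
    using assms(1)[of n] assms(3) by (intro powr_mono2') auto
  finally show ?thesis .
qed

lemma dir_holo:
  fixes e :: "nat \<Rightarrow> nat"
  assumes "\<And>n. n + 2 \<le> e n"
  shows "(\<lambda>s. \<Sum>n. (of_nat (e n) :: complex) powr (-s)) holomorphic_on {s. 1 < Re s}"
proof (rule holo_series_half)
  fix n
  show "(\<lambda>s. (of_nat (e n) :: complex) powr (-s)) holomorphic_on {s. 1 < Re s}"
    by (intro holomorphic_intros)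
next
  fix \<sigma>0 :: real assume "\<sigma>0 > 1"
  then show "\<exists>M. summable M \<and> (\<forall>n s. \<sigma>0 \<le> Re s \<longrightarrow> norm ((of_nat (e n) :: complex) powr (-s)) \<le> M n)"
    using seq_powr_bound[OF assms] summable_shift_powr by (intro exI[of _ "\<lambda>n. real (n + 2) powr (-\<sigma>0)"]) auto
qed

lemma dir_summable:
  fixes e :: "nat \<Rightarrow> nat"
  assumes "\<And>n. n + 2 \<le> e n" "1 < Re s"
  shows "summable (\<lambda>n. norm ((of_nat (e n) :: complex) powr (-s)))"
  by (rule summable_comparison_test[OF _ summable_shift_powr[OF assms(2)]])
     (use seq_powr_bound[OF assms(1) order_refl] assms(2) in auto)


lemma R_bound:
  fixes w :: complex
  assumes "norm w \<le> q" "q < 1"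
  shows "norm (- Ln (1 - w) - w) \<le> norm w ^ 2 / (1 - q)"
proof -
  have "norm (Ln (1 + (-w)) - (-w)) \<le> norm (-w) ^ 2 / (1 - norm (-w))"
    by (rule Ln_approx_linear) (use assms in simp)
  also have "\<dots> = norm w ^ 2 / (1 - norm w)" by simp
  also have "\<dots> \<le> norm w ^ 2 / (1 - q)"
    using assms by (intro divide_left_mono mult_pos_pos) auto
  finally show ?thesis by (simp add: norm_minus_commute add.commute)
qed

lemma P_holo:
  fixes e :: "nat \<Rightarrow> nat"
  assumes e: "\<And>n. n + 2 \<le> e n"
  shows "(\<lambda>s. \<Sum>n. - Ln (1 - (of_nat (e n) :: complex) powr (-s)) - (of_nat (e n) :: complex) powr (-s)) holomorphic_on {s. 1/2 < Re s}"
proof (rule holo_series_half)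
  fix n
  have nz: "1 - (of_nat (e n) :: complex) powr (-s) \<notin> \<real>\<^sub>\<le>\<^sub>0" if "1/2 < Re s" for s
  proof -
    have "norm ((of_nat (e n) :: complex) powr (-s)) = real (e n) powr (- Re s)" by (simp add: norm_nat_powr)
    also have "\<dots> < 1" using e[of n] that by (intro powr_less_one) auto
    finally have "Re ((of_nat (e n) :: complex) powr (-s)) < 1" using complex_Re_le_cmod le_less_trans by blast
    then show ?thesis by (simp add: complex_nonpos_Reals_iff)
  qed
  show "(\<lambda>s. - Ln (1 - (of_nat (e n) :: complex) powr (-s)) - (of_nat (e n) :: complex) powr (-s)) holomorphic_on {s. 1/2 < Re s}"
    using nz by (intro holomorphic_intros) auto
next
  fix \<sigma>0 :: real assume s0: "\<sigma>0 > 1/2"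
  define q where "q = 2 powr (-\<sigma>0)"
  have q1: "q < 1" using s0 unfolding q_def by (intro powr_less_one) auto
  have bnd: "norm (- Ln (1 - (of_nat (e n) :: complex) powr (-s)) - (of_nat (e n) :: complex) powr (-s))
        \<le> (real (n + 2) powr (-\<sigma>0)) ^ 2 / (1 - q)" if "\<sigma>0 \<le> Re s" for n s
  proof -
    have w1: "norm ((of_nat (e n) :: complex) powr (-s)) \<le> real (n + 2) powr (-\<sigma>0)"
      using seq_powr_bound[OF e that] s0 by simp
    have "real (n + 2) powr (-\<sigma>0) \<le> real 2 powr (-\<sigma>0)"
      using s0 by (intro powr_mono2') auto
    then have w2: "norm ((of_nat (e n) :: complex) powr (-s)) \<le> q" using w1 unfolding q_def by simp
    have "norm (- Ln (1 - (of_nat (e n) :: complex) powr (-s)) - (of_nat (e n) :: complex) powr (-s))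
        \<le> norm ((of_nat (e n) :: complex) powr (-s)) ^ 2 / (1 - q)" by (rule R_bound[OF w2 q1])
    also have "\<dots> \<le> (real (n + 2) powr (-\<sigma>0)) ^ 2 / (1 - q)"
      using q1 w1 by (intro divide_right_mono power_mono) auto
    finally show ?thesis .
  qed
  have sq: "(real (n + 2) powr (-\<sigma>0)) ^ 2 = real (n + 2) powr (-(2*\<sigma>0))" for n
    by (simp add: power2_eq_square flip: powr_add)
  have "summable (\<lambda>n. (real (n + 2) powr (-\<sigma>0)) ^ 2 / (1 - q))"
    unfolding sq using summable_shift_powr[of "2*\<sigma>0"] s0 by (intro summable_divide) auto
  then show "\<exists>M. summable M \<and> (\<forall>n s. \<sigma>0 \<le> Re s \<longrightarrow> norm (- Ln (1 - (of_nat (e n) :: complex) powr (-s)) - (of_nat (e n) :: complex) powr (-s)) \<le> M n)"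
    using bnd by blast
qed

lemma W_bound:
  fixes x y :: nat and s :: complex
  assumes "1 \<le> x" "x \<le> y" "0 < \<sigma>0" "\<sigma>0 \<le> Re s" "norm s \<le> K"
  shows "norm ((of_nat y :: complex) powr (-s) - (of_nat x :: complex) powr (-s))
          \<le> (K / \<sigma>0) * (real x powr (-\<sigma>0) - real y powr (-\<sigma>0))"
proof (cases "x = y")
  case True then show ?thesis by simp
next
  case False
  then have xy: "real x < real y" using assms by simp
  define f where "f = (\<lambda>t::real. (of_real t :: complex) powr (-s))"
  define \<phi> where "\<phi> = (\<lambda>t::real. - (K / \<sigma>0) * t powr (-\<sigma>0))"
  have fd: "(f has_vector_derivative (-s * (of_real t) powr (-s - 1))) (at t within T)" if "t > 0" for t T
    unfolding f_def
    by (rule has_vector_derivative_real_field, rule has_field_derivative_powr)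
       (use that in \<open>simp add: complex_nonpos_Reals_iff\<close>)
  have pd: "(\<phi> has_vector_derivative (K * t powr (-\<sigma>0 - 1))) (at t within T)" if "t > 0" for t T
  proof -
    have "((\<lambda>t. t powr (-\<sigma>0)) has_real_derivative (-\<sigma>0) * t powr (-\<sigma>0 - 1)) (at t within T)"
      using has_real_derivative_powr[OF that] by (rule has_field_derivative_at_within)
    then have "(\<phi> has_real_derivative - (K / \<sigma>0) * ((-\<sigma>0) * t powr (-\<sigma>0 - 1))) (at t within T)"
      unfolding \<phi>_def by (rule DERIV_cmult)
    then show ?thesis using assms(3) by (simp add: has_real_derivative_iff_has_vector_derivative)
  qed
  have "norm (f (real y) - f (real x)) \<le> \<phi> (real y) - \<phi> (real x)"
  proof (rule differentiable_bound_general[OF xy])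
    show "continuous_on {real x..real y} f"
    proof (intro continuous_at_imp_continuous_on ballI)
      fix t assume "t \<in> {real x..real y}"
      then have "t > 0" using assms(1) by auto
      show "isCont f t" using has_vector_derivative_continuous[OF fd[OF \<open>t > 0\<close>]] .
    qed
    show "continuous_on {real x..real y} \<phi>"
    proof (intro continuous_at_imp_continuous_on ballI)
      fix t assume "t \<in> {real x..real y}"
      then have "t > 0" using assms(1) by auto
      show "isCont \<phi> t" using has_vector_derivative_continuous[OF pd[OF \<open>t > 0\<close>]] .
    qed
    fix t assume t: "real x < t" "t < real y"
    then have t1: "t \<ge> 1" using assms(1) by simp
    show "(f has_vector_derivative (-s * (of_real t) powr (-s - 1))) (at t)" using fd t1 by simp
    show "(\<phi> has_vector_derivative (K * t powr (-\<sigma>0 - 1))) (at t)" using pd t1 by simp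
    have "norm (-s * (of_real t :: complex) powr (-s - 1)) = norm s * t powr (- Re s - 1)"
      using t1 by (simp add: norm_mult norm_powr_real_powr)
    also have "\<dots> \<le> K * t powr (-\<sigma>0 - 1)"
      using t1 assms order_trans[OF norm_ge_zero[of s] assms(5)] by (intro mult_mono powr_mono) auto
    finally show "norm (-s * (of_real t :: complex) powr (-s - 1)) \<le> K * t powr (-\<sigma>0 - 1)" .
  qed
  then show ?thesis unfolding f_def \<phi>_def by (simp add: algebra_simps)
qed


lemma W_holo:
  fixes e :: "nat \<Rightarrow> nat"
  assumes mono: "mono e" and e: "\<And>n. n + 2 \<le> e n" and m: "1 \<le> m" "r \<le> m"
  shows "(\<lambda>s. \<Sum>k. (of_nat (e (m*k+c+r)) :: complex) powr (-s) - (of_nat (e (m*k+c)) :: complex) powr (-s))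
           holomorphic_on {s. 0 < Re s}"
proof (rule holo_series)
  show "open {s. 0 < Re s}" by (simp add: open_halfspace_Re_gt)
  fix k
  show "(\<lambda>s. (of_nat (e (m*k+c+r)) :: complex) powr (-s) - (of_nat (e (m*k+c)) :: complex) powr (-s)) holomorphic_on {s. 0 < Re s}"
    by (intro holomorphic_intros)
next
  fix z assume z: "z \<in> {s. 0 < Re s}"
  define d where "d = Re z / 2"
  define K where "K = norm z + d"
  have d: "d > 0" using z by (simp add: d_def)
  have sub: "d \<le> Re w \<and> norm w \<le> K" if "w \<in> cball z d" for w
  proof -
    have "\<bar>Re z - Re w\<bar> \<le> d" using that abs_Re_le_cmod[of "z - w"] by (simp add: dist_norm)
    then have "Re z - Re w \<le> d" by simp
    moreover have "norm w \<le> K" using that norm_triangle_ineq2[of w z] unfolding K_def by (simp add: dist_norm norm_minus_commute)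
    ultimately show ?thesis unfolding d_def by (simp add: field_simps)
  qed
  define u where "u = (\<lambda>k. real (e (m*k+c)) powr (-d))"
  have u0: "u \<longlonglongrightarrow> 0"
  proof (rule Lim_null_comparison)
    show "((\<lambda>k::nat. real (k + 2) powr (-d)) \<longlonglongrightarrow> 0)"
      using d by real_asymp
    show "\<forall>\<^sub>F k in sequentially. norm (u k) \<le> real (k + 2) powr (-d)"
    proof (intro always_eventually allI)
      fix k
      have "k \<le> m*k" using m by simp
      then have "k + 2 \<le> e (m*k+c)" using e[of "m*k+c"] by linarith
      then show "norm (u k) \<le> real (k + 2) powr (-d)"
        unfolding u_def using d by (auto intro!: powr_mono2')
    qed
  qed
  have M: "summable (\<lambda>k. (K / d) * (u k - u (Suc k)))"
    using telescope_summable'[OF u0] by (rule summable_mult)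
  have bnd: "norm ((of_nat (e (m*k+c+r)) :: complex) powr (-w) - (of_nat (e (m*k+c)) :: complex) powr (-w))
        \<le> (K / d) * (u k - u (Suc k))" if w: "w \<in> cball z d" for k w
  proof -
    have x1: "1 \<le> e (m*k+c)" using e[of "m*k+c"] by simp
    have xy: "e (m*k+c) \<le> e (m*k+c+r)" by (rule monoD[OF mono]) simp
    have yx: "e (m*k+c+r) \<le> e (m*Suc k+c)" using m by (intro monoD[OF mono]) simp
    have "norm ((of_nat (e (m*k+c+r)) :: complex) powr (-w) - (of_nat (e (m*k+c)) :: complex) powr (-w))
        \<le> (K / d) * (real (e (m*k+c)) powr (-d) - real (e (m*k+c+r)) powr (-d))"
      using sub[OF w] by (intro W_bound[OF x1 xy d]) auto
    also have "\<dots> \<le> (K / d) * (u k - u (Suc k))"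
    proof (intro mult_left_mono)
      have "real (e (m*Suc k+c)) powr (-d) \<le> real (e (m*k+c+r)) powr (-d)"
        using yx x1 xy d by (intro powr_mono2') auto
      then show "real (e (m*k+c)) powr (-d) - real (e (m*k+c+r)) powr (-d) \<le> u k - u (Suc k)"
        unfolding u_def by simp
      show "0 \<le> K / d" using d unfolding K_def by simp
    qed
    finally show ?thesis .
  qed
  have c1: "cball z d \<subseteq> {s. 0 < Re s}" using sub d by fastforce
  show "\<exists>d>0. cball z d \<subseteq> {s. 0 < Re s} \<and> (\<exists>M. summable M \<and> (\<forall>n. \<forall>w\<in>cball z d. norm ((of_nat (e (m*n+c+r)) :: complex) powr (-w) - (of_nat (e (m*n+c)) :: complex) powr (-w)) \<le> M n))"
  proof (intro exI[of _ d] conjI exI[of _ "\<lambda>k. (K / d) * (u k - u (Suc k))"] allI ballI)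
    fix n w assume "w \<in> cball z d"
    then show "norm ((of_nat (e (m*n+c+r)) :: complex) powr (-w) - (of_nat (e (m*n+c)) :: complex) powr (-w)) \<le> (K / d) * (u n - u (Suc n))"
      by (rule bnd)
  qed (use d c1 M in auto)
qed


lemma summable_shift_powr1:
  assumes "\<sigma> > 1"
  shows "summable (\<lambda>n. real (n + 1) powr (-\<sigma>))"
proof -
  have "summable (\<lambda>n. real n powr (-\<sigma>))" using assms by (simp add: summable_real_powr_iff)
  then show ?thesis
    using summable_iff_shift[where f = "\<lambda>n. real n powr (-\<sigma>)" and k = 1] by simp
qed

lemma Aprime_summable:
  fixes a :: "nat \<Rightarrow> nat"
  assumes mono: "mono a" and ge: "\<And>n. n + 2 \<le> a n"
    and C: "C > 0" and \<delta>: "\<delta> > 0"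
    and H: "\<forall>t::real. 0 < t \<and> t < \<delta> \<longrightarrow> summable (\<lambda>n. exp (- real (a n) * t)) \<and> (\<Sum>n. exp (- real (a n) * t)) \<le> C * t powr (-1/2)"
    and s0: "\<sigma>0 > 1/2"
  shows "summable (\<lambda>n. real (a n) powr (-\<sigma>0))"
proof -
  define E where "E = exp 1 * C"
  have E: "E > 0" using C by (simp add: E_def)
  have key: "real (n + 1) \<le> E * real (a n) powr (1/2)" if n: "real n > 1 / \<delta>" for n
  proof -
    define x where "x = real (a n)"
    have x0: "x > 0" using ge[of n] by (simp add: x_def)
    have xn: "x \<ge> real n" using ge[of n] by (simp add: x_def)
    define t where "t = 1 / x"
    have t0: "0 < t" using x0 by (simp add: t_def)
    have "1 / \<delta> < x" using n xn by linarith
    then have "1 < \<delta> * x" using \<delta> by (simp add: field_simps)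
    then have td: "t < \<delta>" using x0 unfolding t_def by (simp add: field_simps)
    from H t0 td have sm: "summable (\<lambda>k. exp (- real (a k) * t))" and le: "(\<Sum>k. exp (- real (a k) * t)) \<le> C * t powr (-1/2)"
      by auto
    have "(\<Sum>k<Suc n. exp (-1::real)) \<le> (\<Sum>k<Suc n. exp (- real (a k) * t))"
    proof (rule sum_mono)
      fix k assume "k \<in> {..<Suc n}"
      then have "a k \<le> a n" by (intro monoD[OF mono]) simp
      then have "real (a k) * t \<le> 1" using x0 unfolding t_def x_def by (simp add: field_simps)
      then show "exp (-1) \<le> exp (- real (a k) * t)" by simp
    qed
    also have "\<dots> \<le> (\<Sum>k. exp (- real (a k) * t))"
      by (rule sum_le_suminf[OF sm]) auto
    also have "\<dots> \<le> C * t powr (-1/2)" by (rule le)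
    also have "t powr (-1/2) = x powr (1/2)"
      unfolding t_def using x0 by (simp add: powr_minus_divide powr_divide)
    finally have "real (n + 1) * exp (-1) \<le> C * x powr (1/2)" by simp
    have "real (n + 1) = real (n + 1) * exp (-1) * exp 1" by (simp add: mult.assoc flip: exp_add)
    also have "\<dots> \<le> C * x powr (1/2) * exp 1"
      using \<open>real (n + 1) * exp (-1) \<le> C * x powr (1/2)\<close> by (intro mult_right_mono) auto
    finally show ?thesis unfolding E_def x_def by (simp add: ac_simps)
  qed
  obtain N where N: "real N > 1 / \<delta>" using reals_Archimedean2 by blast
  have ev: "\<forall>\<^sub>F n in sequentially. norm (real (a n) powr (-\<sigma>0)) \<le> (1 / E) powr (-2*\<sigma>0) * real (n + 1) powr (-2*\<sigma>0)"
    unfolding eventually_sequentially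
  proof (intro exI[of _ N] allI impI)
    fix n assume "N \<le> n"
    then have "real n > 1 / \<delta>" using N by linarith
    from key[OF this] have k: "real (n + 1) / E \<le> real (a n) powr (1/2)" using E by (simp add: field_simps)
    have "norm (real (a n) powr (-\<sigma>0)) = (real (a n) powr (1/2)) powr (-2*\<sigma>0)"
      by (simp add: powr_powr)
    also have "\<dots> \<le> (real (n + 1) / E) powr (-2*\<sigma>0)"
      using k s0 E by (intro powr_mono2') auto
    also have "\<dots> = (1 / E) powr (-2*\<sigma>0) * real (n + 1) powr (-2*\<sigma>0)"
      using E by (simp add: powr_divide powr_mult)
    finally show "norm (real (a n) powr (-\<sigma>0)) \<le> (1 / E) powr (-2*\<sigma>0) * real (n + 1) powr (-2*\<sigma>0)" .
  qed
  show ?thesis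
    by (rule summable_comparison_test_ev[OF ev summable_mult]) (use summable_shift_powr1[of "2*\<sigma>0"] s0 in simp)
qed

lemma Q_holo:
  fixes a :: "nat \<Rightarrow> nat"
  assumes ge: "\<And>n. n + 2 \<le> a n"
    and sm: "\<And>\<sigma>0. \<sigma>0 > 1/2 \<Longrightarrow> summable (\<lambda>n. real (a n) powr (-\<sigma>0))"
  shows "(\<lambda>s. \<Sum>n. (of_nat (a n) :: complex) powr (-s)) holomorphic_on {s. 1/2 < Re s}"
proof (rule holo_series_half)
  fix n
  show "(\<lambda>s. (of_nat (a n) :: complex) powr (-s)) holomorphic_on {s. 1/2 < Re s}"
    by (intro holomorphic_intros)
next
  fix \<sigma>0 :: real assume s0: "\<sigma>0 > 1/2"
  have "norm ((of_nat (a n) :: complex) powr (-s)) \<le> real (a n) powr (-\<sigma>0)" if "\<sigma>0 \<le> Re s" for n s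
    using ge[of n] that by (simp add: norm_nat_powr)
  then show "\<exists>M. summable M \<and> (\<forall>n s. \<sigma>0 \<le> Re s \<longrightarrow> norm ((of_nat (a n) :: complex) powr (-s)) \<le> M n)"
    using sm[OF s0] by blast
qed


lemma R_summable:
  fixes e :: "nat \<Rightarrow> nat"
  assumes e: "\<And>n. n + 2 \<le> e n" and s: "1/2 < Re s"
  shows "summable (\<lambda>n. - Ln (1 - (of_nat (e n) :: complex) powr (-s)) - (of_nat (e n) :: complex) powr (-s))"
proof -
  define \<sigma>0 where "\<sigma>0 = Re s"
  have s0: "\<sigma>0 > 1/2" using s by (simp add: \<sigma>0_def)
  define q where "q = 2 powr (-\<sigma>0)"
  have q1: "q < 1" using s0 unfolding q_def by (intro powr_less_one) auto
  have bnd: "norm (- Ln (1 - (of_nat (e n) :: complex) powr (-s)) - (of_nat (e n) :: complex) powr (-s))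
        \<le> (real (n + 2) powr (-\<sigma>0)) ^ 2 / (1 - q)" for n
  proof -
    have w1: "norm ((of_nat (e n) :: complex) powr (-s)) \<le> real (n + 2) powr (-\<sigma>0)"
      using seq_powr_bound[OF e, of \<sigma>0 s] s0 by (simp add: \<sigma>0_def)
    have "real (n + 2) powr (-\<sigma>0) \<le> real 2 powr (-\<sigma>0)"
      using s0 by (intro powr_mono2') auto
    then have w2: "norm ((of_nat (e n) :: complex) powr (-s)) \<le> q" using w1 unfolding q_def by simp
    have "norm (- Ln (1 - (of_nat (e n) :: complex) powr (-s)) - (of_nat (e n) :: complex) powr (-s))
        \<le> norm ((of_nat (e n) :: complex) powr (-s)) ^ 2 / (1 - q)" by (rule R_bound[OF w2 q1])
    also have "\<dots> \<le> (real (n + 2) powr (-\<sigma>0)) ^ 2 / (1 - q)"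
      using q1 w1 by (intro divide_right_mono power_mono) auto
    finally show ?thesis .
  qed
  have sq: "(real (n + 2) powr (-\<sigma>0)) ^ 2 = real (n + 2) powr (-(2*\<sigma>0))" for n
    by (simp add: power2_eq_square flip: powr_add)
  have "summable (\<lambda>n. (real (n + 2) powr (-\<sigma>0)) ^ 2 / (1 - q))"
    unfolding sq using summable_shift_powr[of "2*\<sigma>0"] s0 by (intro summable_divide) auto
  then show ?thesis by (rule summable_comparison_test[rotated]) (use bnd in auto)
qed

lemma zeta_exp:
  assumes inf: "infinite A" and A2: "\<forall>a\<in>A. 2 \<le> a" and s: "1 < Re s"
  shows "zeta_B A s = exp ((\<Sum>n. - Ln (1 - (of_nat (nth_elem A n) :: complex) powr (-s)) - (of_nat (nth_elem A n) :: complex) powr (-s))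
                          + (\<Sum>n. (of_nat (nth_elem A n) :: complex) powr (-s)))"
proof -
  define e where "e = nth_elem A"
  have e: "\<And>n. n + 2 \<le> e n" unfolding e_def nth_elem_def by (rule enum_ge[OF inf A2])
  define w where "w = (\<lambda>n. (of_nat (e n) :: complex) powr (-s))"
  have S1: "summable (\<lambda>n. - Ln (1 - w n) - w n)" unfolding w_def by (rule R_summable[OF e]) (use s in simp)
  have S2: "summable w" unfolding w_def by (rule summable_norm_cancel, rule dir_summable[OF e s])
  have nz: "1 - w n \<noteq> 0" for n
  proof -
    have "norm (w n) = real (e n) powr (- Re s)" by (simp add: w_def norm_nat_powr)
    also have "\<dots> < 1" using e[of n] s by (intro powr_less_one) auto
    finally show ?thesis by auto
  qed
  have eq: "inverse (1 - w n) = exp (- Ln (1 - w n) - w n + w n)" for n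
    using nz[of n] by (simp add: exp_minus)
  have "zeta_B A s = (\<Prod>n. exp (- Ln (1 - w n) - w n + w n))"
    unfolding zeta_B_def eq[symmetric] by (simp add: w_def e_def)
  also have "\<dots> = exp (\<Sum>n. - Ln (1 - w n) - w n + w n)"
    by (rule prodinf_exp) (rule summable_add[OF S1 S2])
  also have "(\<Sum>n. - Ln (1 - w n) - w n + w n) = (\<Sum>n. - Ln (1 - w n) - w n) + (\<Sum>n. w n)"
    by (rule suminf_add[OF S1 S2, symmetric])
  finally show ?thesis by (simp add: w_def e_def)
qed

lemma has_sum_enum:
  assumes inf: "infinite B" and B2: "\<forall>b\<in>B. 2 \<le> b" and s: "1 < Re s"
  shows "((\<lambda>x. (of_nat x :: complex) powr (-s)) has_sum (\<Sum>n. (of_nat (nth_elem B n) :: complex) powr (-s))) B"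
proof -
  have e: "\<And>n. n + 2 \<le> nth_elem B n" unfolding nth_elem_def by (rule enum_ge[OF inf B2])
  have ns: "summable (\<lambda>n. norm ((of_nat (nth_elem B n) :: complex) powr (-s)))" by (rule dir_summable[OF e s])
  have "((\<lambda>n. (of_nat (nth_elem B n) :: complex) powr (-s)) has_sum (\<Sum>n. (of_nat (nth_elem B n) :: complex) powr (-s))) UNIV"
    by (rule norm_summable_imp_has_sum[OF ns]) (rule summable_sums[OF summable_norm_cancel[OF ns]])
  then show ?thesis
    unfolding nth_elem_def using has_sum_reindex_bij_betw[OF bij_enumerate[OF inf], where f = "\<lambda>x. (of_nat x :: complex) powr (-s)"]
    by simp
qed

lemma split_sum:
  assumes inf: "infinite A" and A2: "\<forall>a\<in>A. 2 \<le> a" and sub: "A' \<subseteq> A" and inf1: "infinite A'" and inf2: "infinite (A - A')"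
    and s: "1 < Re s"
  shows "(\<Sum>n. (of_nat (nth_elem A n) :: complex) powr (-s)) =
          (\<Sum>n. (of_nat (nth_elem A' n) :: complex) powr (-s)) + (\<Sum>n. (of_nat (nth_elem (A - A') n) :: complex) powr (-s))"
proof -
  have h1: "((\<lambda>x. (of_nat x :: complex) powr (-s)) has_sum (\<Sum>n. (of_nat (nth_elem A n) :: complex) powr (-s))) A"
    by (rule has_sum_enum[OF inf A2 s])
  have h2: "((\<lambda>x. (of_nat x :: complex) powr (-s)) has_sum (\<Sum>n. (of_nat (nth_elem A' n) :: complex) powr (-s))) A'"
    by (rule has_sum_enum[OF inf1 _ s]) (use A2 sub in blast)
  have h3: "((\<lambda>x. (of_nat x :: complex) powr (-s)) has_sum (\<Sum>n. (of_nat (nth_elem (A - A') n) :: complex) powr (-s))) (A - A')"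
    by (rule has_sum_enum[OF inf2 _ s]) (use A2 in blast)
  note h4 = has_sum_Un_disjoint[OF h2 h3, simplified]
  have "A' \<union> (A - A') = A" using sub by blast
  with h4 have "((\<lambda>x. (of_nat x :: complex) powr (-s)) has_sum ((\<Sum>n. (of_nat (nth_elem A' n) :: complex) powr (-s)) + (\<Sum>n. (of_nat (nth_elem (A - A') n) :: complex) powr (-s)))) A"
    by simp
  then show ?thesis using h1 has_sum_unique by blast
qed


lemma sum_block: fixes a m :: nat shows "sum g {a..<a+m} = (\<Sum>r<m. g (a + r))"
  by (induction m) auto

lemma regroup:
  fixes e :: "nat \<Rightarrow> nat"
  assumes e: "\<And>n. n + 2 \<le> e n" and m: "1 \<le> m" and s: "1 < Re s"
  shows "(\<Sum>n. (of_nat (e n) :: complex) powr (-s)) =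
           (\<Sum>n<c. (of_nat (e n) :: complex) powr (-s))
         + of_nat m * (\<Sum>k. (of_nat (e (m*k+c)) :: complex) powr (-s))
         + (\<Sum>r<m. \<Sum>k. (of_nat (e (m*k+c+r)) :: complex) powr (-s) - (of_nat (e (m*k+c)) :: complex) powr (-s))"
proof -
  define f where "f = (\<lambda>n. (of_nat (e n) :: complex) powr (-s))"
  have idx: "summable (\<lambda>k. f (idx k))" if "\<And>k. k \<le> idx k" for idx :: "nat \<Rightarrow> nat"
  proof -
    have "\<And>k. k + 2 \<le> (e \<circ> idx) k" using e that by (metis add_le_mono1 comp_apply le_trans)
    from dir_summable[OF this s] show ?thesis unfolding f_def o_def by (rule summable_norm_cancel)
  qed
  have sf: "summable f" using idx[of id] by simp
  have sr: "summable (\<lambda>k. f (m*k+c+r))" for r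
    by (rule idx) (use m in \<open>metis add.commute le_add2 mult_1 mult_le_mono1 trans_le_add2\<close>)
  have split: "suminf f = (\<Sum>n. f (n + c)) + (\<Sum>i<c. f i)" by (rule suminf_split_initial_segment[OF sf])
  have "(\<lambda>n. f (n + c)) sums (\<Sum>n. f (n + c))"
    using sf by (intro summable_sums) simp
  then have "(\<lambda>k. \<Sum>n\<in>{k*m..<k*m+m}. f (n + c)) sums (\<Sum>n. f (n + c))"
    using m by (intro sums_group) auto
  moreover have "(\<Sum>n\<in>{k*m..<k*m+m}. f (n + c)) = (\<Sum>r<m. f (m*k+c+r))" for k
    using sum_block[of "\<lambda>n. f (n + c)" "k*m" m] by (simp add: ac_simps)
  ultimately have "(\<lambda>k. \<Sum>r<m. f (m*k+c+r)) sums (\<Sum>n. f (n + c))"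
    by simp
  then have "(\<Sum>n. f (n + c)) = (\<Sum>k. \<Sum>r<m. f (m*k+c+r))" by (simp add: sums_iff)
  also have "\<dots> = (\<Sum>r<m. \<Sum>k. f (m*k+c+r))" by (rule suminf_sum) (rule sr)
  also have "\<dots> = (\<Sum>r<m. (\<Sum>k. f (m*k+c)) + (\<Sum>k. f (m*k+c+r) - f (m*k+c)))"
  proof (rule sum.cong[OF refl])
    fix r
    have "(\<Sum>k. f (m*k+c)) + (\<Sum>k. f (m*k+c+r) - f (m*k+c)) = (\<Sum>k. f (m*k+c) + (f (m*k+c+r) - f (m*k+c)))"
      using sr[of 0] sr[of r] by (intro suminf_add) (auto intro: summable_diff)
    then show "(\<Sum>k. f (m*k+c+r)) = (\<Sum>k. f (m*k+c)) + (\<Sum>k. f (m*k+c+r) - f (m*k+c))" by simp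
  qed
  also have "\<dots> = of_nat m * (\<Sum>k. f (m*k+c)) + (\<Sum>r<m. \<Sum>k. f (m*k+c+r) - f (m*k+c))"
    by (simp add: sum.distrib)
  finally have X: "(\<Sum>n. f (n + c)) = of_nat m * (\<Sum>k. f (m*k+c)) + (\<Sum>r<m. \<Sum>k. f (m*k+c+r) - f (m*k+c))" .
  have "suminf f = (\<Sum>n<c. f n) + of_nat m * (\<Sum>k. f (m*k+c)) + (\<Sum>r<m. \<Sum>k. f (m*k+c+r) - f (m*k+c))"
    unfolding split X by (simp add: ac_simps)
  then show ?thesis unfolding f_def .
qed


lemma Bset:
  fixes e :: "nat \<Rightarrow> nat"
  assumes se: "strict_mono e" and m: "1 \<le> m"
  shows "nth_elem ((\<lambda>n. e (m * n + j - 1)) ` {1..}) k = e (m*k + (m + j - 1))"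
proof -
  have r: "{1..} = range Suc"
  proof (rule set_eqI)
    fix x :: nat show "x \<in> {1..} \<longleftrightarrow> x \<in> range Suc" by (cases x) auto
  qed
  have "(\<lambda>n. e (m * n + j - 1)) ` {1..} = range (\<lambda>k. e (m*k + (m + j - 1)))"
    unfolding r image_image using m by (simp add: algebra_simps)
  moreover have "strict_mono (\<lambda>k. e (m*k + (m + j - 1)))"
  proof (rule strict_monoI)
    fix x y :: nat assume "x < y"
    then have "m*x < m*y" using m by simp
    then have "m*x + (m + j - 1) < m*y + (m + j - 1)" by (rule add_less_mono1)
    then show "e (m*x + (m + j - 1)) < e (m*y + (m + j - 1))" by (rule strict_monoD[OF se])
  qed
  ultimately show ?thesis unfolding nth_elem_def by (simp add: enum_range)
qed

theorem proposition2p2: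
  fixes A A' :: "nat set" and i j :: nat and U :: "complex set" and f :: "complex \<Rightarrow> complex"
  assumes "infinite A" and "\<forall>a\<in>A. 2 \<le> a"
    and "A' \<subseteq> A" and "infinite A'"
    and "\<exists>C>0. \<exists>\<delta>>0. \<forall>t::real. 0 < t \<and> t < \<delta> \<longrightarrow>
            summable (\<lambda>n. exp (- real (nth_elem A' n) * t)) \<and>
            (\<Sum>n. exp (- real (nth_elem A' n) * t)) \<le> C * t powr (-1/2)"
    and "infinite (A - A')"
    and "open U" and "connected U" and "U \<inter> {s. 1 < Re s} \<noteq> {}"
    and "f holomorphic_on U"
    and "\<forall>s\<in>U. 1 < Re s \<longrightarrow>
            f s = dirichlet_D ((\<lambda>n. nth_elem (A - A') (2^i * n + j - 1)) ` {1..}) s"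
  shows "\<exists>Z. Z holomorphic_on ((U \<inter> {s. 1/2 < Re s}) \<union> {s. 1 < Re s})
           \<and> (\<forall>s. 1 < Re s \<longrightarrow> Z s = zeta_B A s)
           \<and> (\<forall>s\<in>U \<inter> {s. 1/2 < Re s}. Z s \<noteq> 0)"
proof -
  note inf = assms(1) and A2 = assms(2) and sub = assms(3) and inf1 = assms(4) and inf2 = assms(6)
  from assms(5) obtain C \<delta> where C: "C > 0" and \<delta>: "\<delta> > 0" and
    H: "\<forall>t::real. 0 < t \<and> t < \<delta> \<longrightarrow> summable (\<lambda>n. exp (- real (nth_elem A' n) * t)) \<and>
            (\<Sum>n. exp (- real (nth_elem A' n) * t)) \<le> C * t powr (-1/2)"
    by blast
  define m :: nat where "m = 2^i"
  have m1: "1 \<le> m" unfolding m_def by simp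
  define c where "c = m + j - 1"
  define e where "e = nth_elem (A - A')"
  define a' where "a' = nth_elem A'"
  define aA where "aA = nth_elem A"
  have A2': "\<forall>a\<in>A'. 2 \<le> a" using A2 sub by blast
  have A2'': "\<forall>a\<in>A - A'. 2 \<le> a" using A2 by blast
  have e_ge: "\<And>n. n + 2 \<le> e n" unfolding e_def nth_elem_def by (rule enum_ge[OF inf2 A2''])
  have a'_ge: "\<And>n. n + 2 \<le> a' n" unfolding a'_def nth_elem_def by (rule enum_ge[OF inf1 A2'])
  have aA_ge: "\<And>n. n + 2 \<le> aA n" unfolding aA_def nth_elem_def by (rule enum_ge[OF inf A2])
  have e_sm: "strict_mono e" unfolding e_def nth_elem_def by (rule strict_mono_enumerate[OF inf2])
  have a'_sm: "strict_mono a'" unfolding a'_def nth_elem_def by (rule strict_mono_enumerate[OF inf1])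
  have e_mono: "mono e" using e_sm by (rule strict_mono_mono)
  have a'_mono: "mono a'" using a'_sm by (rule strict_mono_mono)
  define P where "P = (\<lambda>s. \<Sum>n. - Ln (1 - (of_nat (aA n) :: complex) powr (-s)) - (of_nat (aA n) :: complex) powr (-s))"
  define Q where "Q = (\<lambda>s. \<Sum>n. (of_nat (a' n) :: complex) powr (-s))"
  define W where "W = (\<lambda>r s. \<Sum>k. (of_nat (e (m*k+c+r)) :: complex) powr (-s) - (of_nat (e (m*k+c)) :: complex) powr (-s))"
  define F where "F = (\<lambda>s. \<Sum>k. (of_nat (e (m*k+c)) :: complex) powr (-s))"
  define Hf where "Hf = (\<lambda>s. P s + Q s + (\<Sum>n<c. (of_nat (e n) :: complex) powr (-s)) + (\<Sum>r<m. W r s))"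
  define g where "g = (\<lambda>s. if s \<in> U then f s else F s)"
  define Z where "Z = (\<lambda>s. exp (Hf s + of_nat m * g s))"
  have hP: "P holomorphic_on {s. 1/2 < Re s}" unfolding P_def by (rule P_holo[OF aA_ge])
  have hQ: "Q holomorphic_on {s. 1/2 < Re s}" unfolding Q_def
    by (rule Q_holo[OF a'_ge], rule Aprime_summable[OF a'_mono a'_ge C \<delta>]) (use H in \<open>simp_all add: a'_def\<close>)
  have hW: "W r holomorphic_on {s. 1/2 < Re s}" if "r < m" for r
  proof -
    have "W r holomorphic_on {s. 0 < Re s}" unfolding W_def
      by (rule W_holo[OF e_mono e_ge m1]) (use that in simp)
    then show ?thesis by (rule holomorphic_on_subset) auto
  qed
  have hH: "Hf holomorphic_on {s. 1/2 < Re s}" unfolding Hf_def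
    using hP hQ hW by (intro holomorphic_intros) auto
  have ge2: "k + 2 \<le> e (m*k+c)" for k
  proof -
    have "k \<le> m*k" using m1 by simp
    then show ?thesis using e_ge[of "m*k+c"] by linarith
  qed
  have hF: "F holomorphic_on {s. 1 < Re s}" unfolding F_def
    by (rule dir_holo[where e = "\<lambda>k. e (m*k+c)", OF ge2])
  have DF: "dirichlet_D ((\<lambda>n. nth_elem (A - A') (2^i * n + j - 1)) ` {1..}) s = F s" for s
    unfolding dirichlet_D_def F_def Bset[OF e_sm[unfolded e_def] m1[unfolded m_def]]
    by (simp add: e_def c_def m_def)
  have hg: "g holomorphic_on (U \<union> {s. 1 < Re s})"
  proof (rule holomorphic_on_Un)
    show "g holomorphic_on U" by (rule holomorphic_transform[OF assms(10)]) (simp add: g_def)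
    show "g holomorphic_on {s. 1 < Re s}"
      by (rule holomorphic_transform[OF hF]) (use assms(11) DF in \<open>auto simp: g_def\<close>)
  qed (use assms(7) in \<open>auto simp: open_halfspace_Re_gt\<close>)
  define T where "T = (U \<inter> {s. 1/2 < Re s}) \<union> {s. 1 < Re s}"
  have hH': "Hf holomorphic_on T" by (rule holomorphic_on_subset[OF hH]) (auto simp: T_def)
  have hg': "g holomorphic_on T" by (rule holomorphic_on_subset[OF hg]) (auto simp: T_def)
  have hZ: "Z holomorphic_on T" unfolding Z_def
    using hH' hg' by (intro holomorphic_intros)
  have eqZ: "Z s = zeta_B A s" if s: "1 < Re s" for s
  proof -
    have gs: "g s = F s" using assms(11) DF s by (simp add: g_def)
    have "zeta_B A s = exp (P s + (\<Sum>n. (of_nat (aA n) :: complex) powr (-s)))"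
      unfolding P_def aA_def by (rule zeta_exp[OF inf A2 s])
    also have "(\<Sum>n. (of_nat (aA n) :: complex) powr (-s)) = Q s + (\<Sum>n. (of_nat (e n) :: complex) powr (-s))"
      unfolding aA_def Q_def a'_def e_def by (rule split_sum[OF inf A2 sub inf1 inf2 s])
    also have "(\<Sum>n. (of_nat (e n) :: complex) powr (-s)) =
           (\<Sum>n<c. (of_nat (e n) :: complex) powr (-s)) + of_nat m * F s + (\<Sum>r<m. W r s)"
      unfolding F_def W_def by (rule regroup[OF e_ge m1 s])
    finally show ?thesis unfolding Z_def gs Hf_def by (simp add: algebra_simps)
  qed
  show ?thesis
    using hZ eqZ unfolding T_def by (intro exI[of _ Z]) (auto simp: Z_def)
qed

end
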